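(* Let $G=(V,E)$ be a claw-free graph and $I$ a maximum cardinality independent set of $G$. Let $a,b\in I$, $a\ne b$, and let $X$ be a pack different from $V_{a,b}$. If there is an edge of $G$ with one endpoint in $V_{a,b}$ and the other in $X$, then $X$ and $V_{a,b}$ have a common leg, i.e., $X=V_a$ or $X=V_b$ or $X=V_{a,c}$ or $X=V_{b,c}$ for some $c\in I$.
   Context: Graphs are finite, simple, undirected; claw-free means no induced $K_{1,3}$. For $a\ne b$ in $I$ let $V_{a,b}=V_{b,a}=\{v\in V\setminus I: N(v)\cap I=\{a,b\}\}$, and for $a\in I$ let $V_a=\{v\in V\setminus I : N(v)\cap I=\{a\}\}$. These sets are called packs: the $V_a$ are $1$-packs with leg $a$, the $V_{a,b}$ are $2$-packs with legs $a$ and $b$. (Every vertex of $V\setminus I$ has one or two neighbours in $I$, so the packs partition $V\setminus I$.) *)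

theory Defs
  imports Main
begin

definition simple_graph :: "'a set \<Rightarrow> ('a \<Rightarrow> 'a \<Rightarrow> bool) \<Rightarrow> bool" where
  "simple_graph V E \<longleftrightarrow> finite V
     \<and> (\<forall>u v. E u v \<longrightarrow> u \<in> V \<and> v \<in> V)
     \<and> (\<forall>u v. E u v \<longrightarrow> E v u)
     \<and> (\<forall>v. \<not> E v v)"

definition claw_free :: "'a set \<Rightarrow> ('a \<Rightarrow> 'a \<Rightarrow> bool) \<Rightarrow> bool" where
  "claw_free V E \<longleftrightarrow> \<not> (\<exists>x\<in>V. \<exists>y\<in>V. \<exists>z\<in>V. \<exists>w\<in>V.
      y \<noteq> z \<and> y \<noteq> w \<and> z \<noteq> w \<and>
      E x y \<and> E x z \<and> E x w \<and> \<not> E y z \<and> \<not> E y w \<and> \<not> E z w)"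

definition independent_set :: "'a set \<Rightarrow> ('a \<Rightarrow> 'a \<Rightarrow> bool) \<Rightarrow> 'a set \<Rightarrow> bool" where
  "independent_set V E I \<longleftrightarrow> I \<subseteq> V \<and> (\<forall>x\<in>I. \<forall>y\<in>I. \<not> E x y)"

definition max_independent_set :: "'a set \<Rightarrow> ('a \<Rightarrow> 'a \<Rightarrow> bool) \<Rightarrow> 'a set \<Rightarrow> bool" where
  "max_independent_set V E I \<longleftrightarrow> independent_set V E I
     \<and> (\<forall>J. independent_set V E J \<longrightarrow> card J \<le> card I)"

definition nbh :: "('a \<Rightarrow> 'a \<Rightarrow> bool) \<Rightarrow> 'a \<Rightarrow> 'a set" where
  "nbh E v = {u. E v u}"

definition pack1 :: "'a set \<Rightarrow> ('a \<Rightarrow> 'a \<Rightarrow> bool) \<Rightarrow> 'a set \<Rightarrow> 'a \<Rightarrow> 'a set" where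
  "pack1 V E I a = {v \<in> V - I. nbh E v \<inter> I = {a}}"

definition pack2 :: "'a set \<Rightarrow> ('a \<Rightarrow> 'a \<Rightarrow> bool) \<Rightarrow> 'a set \<Rightarrow> 'a \<Rightarrow> 'a \<Rightarrow> 'a set" where
  "pack2 V E I a b = {v \<in> V - I. nbh E v \<inter> I = {a, b}}"

definition is_pack :: "'a set \<Rightarrow> ('a \<Rightarrow> 'a \<Rightarrow> bool) \<Rightarrow> 'a set \<Rightarrow> 'a set \<Rightarrow> bool" where
  "is_pack V E I X \<longleftrightarrow> (\<exists>c\<in>I. X = pack1 V E I c)
     \<or> (\<exists>c\<in>I. \<exists>d\<in>I. c \<noteq> d \<and> X = pack2 V E I c d)"

end

theory Submission
  imports Defs
begin

theorem lemma5:
  fixes V :: "'a set" and E :: "'a \<Rightarrow> 'a \<Rightarrow> bool" and I X :: "'a set" and a b :: 'a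
  assumes "simple_graph V E"
    and "claw_free V E"
    and "max_independent_set V E I"
    and "a \<in> I" and "b \<in> I" and "a \<noteq> b"
    and "is_pack V E I X"
    and "X \<noteq> pack2 V E I a b"
    and "\<exists>u\<in>pack2 V E I a b. \<exists>w\<in>X. E u w"
  shows "X = pack1 V E I a \<or> X = pack1 V E I b
         \<or> (\<exists>c\<in>I. (c \<noteq> a \<and> X = pack2 V E I a c) \<or> (c \<noteq> b \<and> X = pack2 V E I b c))"
proof -
  obtain u w where u: "u \<in> pack2 V E I a b" and w: "w \<in> X" and uw: "E u w"
    using assms(9) by blast
  have sym: "\<And>x y. E x y \<Longrightarrow> E y x" and inV: "\<And>x y. E x y \<Longrightarrow> x \<in> V \<and> y \<in> V"
    using assms(1) unfolding simple_graph_def by blast+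
  have IV: "I \<subseteq> V" and indep: "\<And>x y. x \<in> I \<Longrightarrow> y \<in> I \<Longrightarrow> \<not> E x y"
    using assms(3) unfolding max_independent_set_def independent_set_def by blast+
  have uI: "nbh E u \<inter> I = {a, b}" "u \<in> V" using u unfolding pack2_def by auto
  have ua: "E u a" "E u b" using uI(1) unfolding nbh_def by auto
  have noclaw: False if "w \<notin> I" "\<not> E w a" "\<not> E w b"
  proof -
    have "w \<noteq> a" "w \<noteq> b" using that assms(4,5) by auto
    moreover have "\<not> E a w" "\<not> E b w" using that sym by blast+
    moreover have "\<not> E a b" using indep assms(4,5) by blast
    moreover have "a \<in> V" "b \<in> V" "w \<in> V" using inV ua uw by blast+
    ultimately have "\<exists>x\<in>V. \<exists>y\<in>V. \<exists>z\<in>V. \<exists>t\<in>V.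
      y \<noteq> z \<and> y \<noteq> t \<and> z \<noteq> t \<and>
      E x y \<and> E x z \<and> E x t \<and> \<not> E y z \<and> \<not> E y t \<and> \<not> E z t"
      using uI(2) ua uw assms(6) by (intro bexI[of _ u] bexI[of _ a] bexI[of _ b] bexI[of _ w]) auto
    then show False using assms(2) unfolding claw_free_def by blast
  qed
  from assms(7) show ?thesis unfolding is_pack_def
  proof (elim disjE bexE conjE)
    fix c assume c: "c \<in> I" "X = pack1 V E I c"
    have wI: "w \<notin> I" "nbh E w \<inter> I = {c}" using w c unfolding pack1_def by auto
    show ?thesis
    proof (cases "c = a \<or> c = b")
      case True then show ?thesis using c by auto
    next
      case False
      then have "a \<notin> nbh E w \<inter> I" "b \<notin> nbh E w \<inter> I" using wI by auto
      then have "\<not> E w a" "\<not> E w b" using assms(4,5) unfolding nbh_def by blast+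
      then show ?thesis using noclaw wI by blast
    qed
  next
    fix c d assume c: "c \<in> I" "d \<in> I" "c \<noteq> d" "X = pack2 V E I c d"
    have wI: "w \<notin> I" "nbh E w \<inter> I = {c, d}" using w c unfolding pack2_def by auto
    have comm: "pack2 V E I c d = pack2 V E I d c" unfolding pack2_def by (auto simp: insert_commute)
    show ?thesis
    proof (cases "c = a \<or> c = b \<or> d = a \<or> d = b")
      case True
      then consider "c = a" | "c = b" | "d = a" | "d = b" by blast
      then show ?thesis
      proof cases
        case 1 then have "d \<noteq> a \<and> X = pack2 V E I a d" using c by auto
        then show ?thesis using c(1,2) by blast
      next
        case 2 then have "d \<noteq> b \<and> X = pack2 V E I b d" using c by auto
        then show ?thesis using c(1,2) by blast
      next
        case 3 then have "c \<noteq> a \<and> X = pack2 V E I a c" using c comm by auto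
        then show ?thesis using c(1,2) by blast
      next
        case 4 then have "c \<noteq> b \<and> X = pack2 V E I b c" using c comm by auto
        then show ?thesis using c(1,2) by blast
      qed
    next
      case False
      then have "a \<notin> nbh E w \<inter> I" "b \<notin> nbh E w \<inter> I" using wI by auto
      then have "\<not> E w a" "\<not> E w b" using assms(4,5) unfolding nbh_def by blast+
      then show ?thesis using noclaw wI by blast
    qed
  qed
qed

end
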